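(* Let $T$ be a compact topological space. Let $\mu,\mu'$ be strictly positive measures on the Borel $\sigma$-algebra of $T$ with $\mu$ absolutely continuous with respect to $\mu'$, and let $d,d'$ be metrics on $T$, both inducing the topology of $T$, so that $X=(T,d,\mu)$ and $X'=(T,d',\mu')$ are metric measure spaces, with distance kernel operators $D$ and $D'$. If $\Phi^X=\Phi^{X'}$ (i.e. the two distance kernel embeddings $T\to\mathbb{C}^\infty$ coincide, so that $D$ and $D'$ have the same scaled eigenfunctions $\alpha_i$), then $d=d'$.
   Context: A measure is strictly positive if every nonempty open set has positive measure. For a compact metric measure space $(T,d,\mu)$ (Radon measure) the distance kernel operator is $(Df)(x)=\int_T f(y)d(x,y)\,d\mu(y)$ on $L^2(T,\mu)$, with orthonormal real eigenfunctions $\phi_i$ and eigenvalues $\lambda_i$ ordered by decreasing absolute value (non-zero eigenvalues of multiplicity one, signs fixed by a convention). $\alpha_i=\sqrt{\lambda_i}\phi_i$ (square root with positive imaginary part if $\lambda_i<0$; zero-eigenvalue eigenfunctions replaced by $0$), and $\Phi^X(x)=(\alpha_1(x),\alpha_2(x),\dots)$. *)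

theory Defs
  imports "HOL-Analysis.Analysis"
begin

definition metric_inducing_topology :: "('a::topological_space \<Rightarrow> 'a \<Rightarrow> real) \<Rightarrow> bool" where
  "metric_inducing_topology d \<longleftrightarrow>
     Metric_space UNIV d \<and> Metric_space.mtopology UNIV d = euclidean"

definition strictly_positive :: "'a::topological_space measure \<Rightarrow> bool" where
  "strictly_positive \<mu> \<longleftrightarrow> (\<forall>U. open U \<and> U \<noteq> {} \<longrightarrow> emeasure \<mu> U > 0)"

definition dist_kernel_op ::
  "'a measure \<Rightarrow> ('a \<Rightarrow> 'a \<Rightarrow> real) \<Rightarrow> ('a \<Rightarrow> real) \<Rightarrow> 'a \<Rightarrow> real" where
  "dist_kernel_op \<mu> d f x = (\<integral>y. f y * d x y \<partial>\<mu>)"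

definition square_integrable :: "'a measure \<Rightarrow> ('a \<Rightarrow> real) \<Rightarrow> bool" where
  "square_integrable \<mu> f \<longleftrightarrow> f \<in> borel_measurable \<mu> \<and> integrable \<mu> (\<lambda>x. (f x)\<^sup>2)"

definition is_eigenfun :: "'a measure \<Rightarrow> ('a \<Rightarrow> 'a \<Rightarrow> real) \<Rightarrow> real \<Rightarrow> ('a \<Rightarrow> real) \<Rightarrow> bool" where
  "is_eigenfun \<mu> d lam f \<longleftrightarrow> square_integrable \<mu> f \<and>
     (AE x in \<mu>. dist_kernel_op \<mu> d f x = lam * f x)"

definition is_eigenvalue :: "'a measure \<Rightarrow> ('a \<Rightarrow> 'a \<Rightarrow> real) \<Rightarrow> real \<Rightarrow> bool" where
  "is_eigenvalue \<mu> d lam \<longleftrightarrow> (\<exists>f. is_eigenfun \<mu> d lam f \<and> \<not> (AE x in \<mu>. f x = 0))"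

definition simple_nonzero_spectrum :: "'a measure \<Rightarrow> ('a \<Rightarrow> 'a \<Rightarrow> real) \<Rightarrow> bool" where
  "simple_nonzero_spectrum \<mu> d \<longleftrightarrow>
     (\<forall>lam f g. lam \<noteq> 0 \<and> is_eigenfun \<mu> d lam f \<and> \<not> (AE x in \<mu>. f x = 0)
        \<and> is_eigenfun \<mu> d lam g \<longrightarrow> (\<exists>c. AE x in \<mu>. g x = c * f x))"

text \<open>Admissible spectral data (lam_i, phi_i) of D: the phi_i with lam_i \<noteq> 0 are
  orthonormal real eigenfunctions (evaluated through their continuous representative,
  i.e. the eigen equation holds at every point), the lam_i are ordered by decreasing
  absolute value, and every non-zero eigenvalue of D occurs among them.  Entries with
  lam_i = 0 correspond to zero-eigenvalue eigenfunctions, which are replaced by 0 in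
  the embedding, so no condition is imposed on them.\<close>
definition spectral_data ::
  "'a measure \<Rightarrow> ('a \<Rightarrow> 'a \<Rightarrow> real) \<Rightarrow> (nat \<Rightarrow> real) \<Rightarrow> (nat \<Rightarrow> 'a \<Rightarrow> real) \<Rightarrow> bool" where
  "spectral_data \<mu> d lam phi \<longleftrightarrow>
     (\<forall>i j. i \<le> j \<longrightarrow> \<bar>lam j\<bar> \<le> \<bar>lam i\<bar>) \<and>
     (\<forall>i. lam i \<noteq> 0 \<longrightarrow> square_integrable \<mu> (phi i) \<and>
            (\<forall>x. dist_kernel_op \<mu> d (phi i) x = lam i * phi i x)) \<and>
     (\<forall>i j. lam i \<noteq> 0 \<and> lam j \<noteq> 0 \<longrightarrow>
            (\<integral>x. phi i x * phi j x \<partial>\<mu>) = (if i = j then 1 else 0)) \<and>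
     (\<forall>l. l \<noteq> 0 \<and> is_eigenvalue \<mu> d l \<longrightarrow> (\<exists>i. lam i = l))"

text \<open>alpha_i = sqrt(lam_i) phi_i (principal complex square root, which has positive
  imaginary part for lam_i < 0), and 0 for zero eigenvalues.\<close>
definition scaled_eigenfun :: "(nat \<Rightarrow> real) \<Rightarrow> (nat \<Rightarrow> 'a \<Rightarrow> real) \<Rightarrow> nat \<Rightarrow> 'a \<Rightarrow> complex" where
  "scaled_eigenfun lam phi i x =
     (if lam i = 0 then 0 else csqrt (complex_of_real (lam i)) * complex_of_real (phi i x))"

definition dk_embedding :: "(nat \<Rightarrow> real) \<Rightarrow> (nat \<Rightarrow> 'a \<Rightarrow> real) \<Rightarrow> 'a \<Rightarrow> nat \<Rightarrow> complex" where
  "dk_embedding lam phi x = (\<lambda>i. scaled_eigenfun lam phi i x)"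

end

theory Submission
  imports Defs "HOL-Complex_Analysis.Great_Picard"
begin

locale dkm =
  fixes M :: "'a::topological_space measure" and d :: "'a \<Rightarrow> 'a \<Rightarrow> real"
  assumes cpt: "compact (UNIV :: 'a set)"
    and sets_M: "sets M = sets borel"
    and finM: "finite_measure M"
    and posM: "strictly_positive M"
    and metd: "metric_inducing_topology d"
begin

lemma MS: "Metric_space UNIV d" using metd unfolding metric_inducing_topology_def by auto

interpretation D: Metric_space UNIV d by (rule MS)
interpretation F: finite_measure M by (rule finM)

lemma mtop: "D.mtopology = euclidean" using metd unfolding metric_inducing_topology_def by auto

lemma space_M[simp]: "space M = UNIV"
  using sets_eq_imp_space_eq[OF sets_M] by simp

lemma d_nonneg[simp]: "0 \<le> d x y" by simp
lemma d_sym: "d x y = d y x" by (rule D.commute)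
lemma d_tri: "d x z \<le> d x y + d y z" by (rule D.triangle) auto
lemma d_zero[simp]: "d x x = 0" by simp

lemma open_iff_mball: "open S \<longleftrightarrow> (\<forall>x\<in>S. \<exists>r>0. D.mball x r \<subseteq> S)"
proof -
  have "open S \<longleftrightarrow> openin D.mtopology S" by (simp add: mtop)
  also have "\<dots> \<longleftrightarrow> (\<forall>x\<in>S. \<exists>r>0. D.mball x r \<subseteq> S)"
    unfolding D.openin_mtopology by blast
  finally show ?thesis .
qed

lemma open_mball: "open (D.mball x r)"
  using D.openin_mball[of x r] by (simp add: mtop)

lemma lip_cont:
  fixes f :: "'a \<Rightarrow> real"
  assumes "\<And>x y. \<bar>f x - f y\<bar> \<le> L * d x y"
  shows "continuous_on UNIV f"
proof -
  have "open (f -` B)" if "open B" for B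
    unfolding open_iff_mball
  proof
    fix x assume "x \<in> f -` B"
    then obtain e where e: "e > 0" "ball (f x) e \<subseteq> B" using \<open>open B\<close> open_contains_ball by blast
    define r where "r = e / (\<bar>L\<bar> + 1)"
    have r: "r > 0" using e by (simp add: r_def)
    have "D.mball x r \<subseteq> f -` B"
    proof
      fix y assume "y \<in> D.mball x r"
      then have "d x y < r" by simp
      have "L * d x y \<le> \<bar>L\<bar> * d x y" by (simp add: mult_right_mono)
      also have "\<dots> \<le> \<bar>L\<bar> * r" using \<open>d x y < r\<close> by (simp add: mult_left_mono)
      also have "\<dots> < e" using e unfolding r_def by (simp add: field_simps)
      finally have "\<bar>f x - f y\<bar> < e" using assms[of x y] by linarith
      then have "f y \<in> ball (f x) e" by (simp add: dist_real_def)
      then show "y \<in> f -` B" using e by auto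
    qed
    then show "\<exists>r>0. D.mball x r \<subseteq> f -` B" using r by blast
  qed
  then show ?thesis by (simp add: continuous_on_open_vimage)
qed

lemma d_cont: "continuous_on UNIV (d x)"
proof (rule lip_cont[where L=1])
  fix a b
  show "\<bar>d x a - d x b\<bar> \<le> 1 * d a b"
    using d_tri[of x a b] d_tri[of x b a] d_sym[of a b] by linarith
qed

lemma d_cont2: "continuous_on UNIV (\<lambda>y. d y x)"
  using d_cont[of x] by (simp add: d_sym)

lemma meas_borel_cont: "continuous_on UNIV f \<Longrightarrow> (f::'a \<Rightarrow> real) \<in> borel_measurable M"
  using borel_measurable_continuous_onI measurable_cong_sets[OF sets_M refl] by blast

lemma meas_lip:
  fixes f :: "'a \<Rightarrow> real"
  assumes "\<And>x y. \<bar>f x - f y\<bar> \<le> L * d x y"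
  shows "f \<in> borel_measurable M"
  by (rule meas_borel_cont[OF lip_cont[OF assms]])

lemma d_meas[measurable]: "d x \<in> borel_measurable M"
  by (rule meas_borel_cont[OF d_cont])

lemma d_meas2[measurable]: "(\<lambda>y. d y x) \<in> borel_measurable M"
  by (rule meas_borel_cont[OF d_cont2])

lemma d_bounded: "\<exists>B>0. \<forall>x y. d x y \<le> B"
proof -
  obtain x0 :: 'a where True by auto
  have "compact (range (d x0))" by (rule compact_continuous_image[OF d_cont cpt])
  then have "bounded (range (d x0))" by (rule compact_imp_bounded)
  then obtain b where b: "\<And>y. \<bar>d x0 y\<bar> \<le> b" by (auto simp: bounded_iff)
  have "d x y \<le> 2 * b + 1" for x y
    using d_tri[of x y x0] b[of x] b[of y] d_sym[of x x0] by linarith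
  moreover have "2 * b + 1 > 0" using b[of x0] by simp
  ultimately show ?thesis by blast
qed

definition Bd where "Bd = (SOME B. B > 0 \<and> (\<forall>x y. d x y \<le> B))"

lemma Bd: "Bd > 0" "d x y \<le> Bd"
  using someI_ex[OF d_bounded] unfolding Bd_def by auto

lemma abs_d_le: "\<bar>d x y\<bar> \<le> Bd" using Bd by simp

lemma finite_net: "\<exists>F. finite F \<and> (\<forall>x. \<exists>a\<in>F. d a x < e)" if "e > 0" for e
proof -
  have cov: "UNIV \<subseteq> (\<Union>c\<in>UNIV. D.mball c e)" using that by auto
  obtain C where C: "C \<subseteq> UNIV" "finite C" "UNIV \<subseteq> (\<Union>c\<in>C. D.mball c e)"
    by (rule compactE_image[OF cpt, of UNIV "\<lambda>c. D.mball c e"]) (use open_mball cov in auto)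
  have "\<exists>a\<in>C. d a x < e" for x
  proof -
    from C(3) obtain a where "a \<in> C" "x \<in> D.mball a e" by blast
    then show ?thesis by auto
  qed
  then show ?thesis using C(2) by blast
qed

definition Q where "Q = (\<Union>k::nat. SOME F. finite F \<and> (\<forall>x. \<exists>a\<in>F. d a x < 1 / (Suc k)))"

lemma Q_countable: "countable Q"
proof -
  have "finite (SOME F. finite F \<and> (\<forall>x. \<exists>a\<in>F. d a x < 1 / (Suc k)))" for k
    using someI_ex[OF finite_net[of "1 / Suc k"]] by simp
  then show ?thesis unfolding Q_def by (intro countable_UN) (auto intro: countable_finite)
qed

lemma Q_dense: "e > 0 \<Longrightarrow> \<exists>a\<in>Q. d a x < e"
proof -
  assume "e > 0"
  then obtain k :: nat where k: "1 / Suc k < e"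
    using reals_Archimedean[OF \<open>e > 0\<close>] by (auto simp: inverse_eq_divide)
  obtain a where "a \<in> (SOME F. finite F \<and> (\<forall>x. \<exists>a\<in>F. d a x < 1 / (Suc k)))" "d a x < 1 / Suc k"
    using someI_ex[OF finite_net[of "1 / Suc k"]] by auto
  then have "a \<in> Q" unfolding Q_def by blast
  moreover have "d a x < e" using k \<open>d a x < 1 / Suc k\<close> by linarith
  ultimately show ?thesis by blast
qed

lemma Q_ne: "Q \<noteq> {}" using Q_dense[of 1] by auto

definition q where "q = from_nat_into Q"

lemma q_dense: "e > 0 \<Longrightarrow> \<exists>j. d x (q j) < e"
proof -
  assume "e > 0"
  then obtain a where a: "a \<in> Q" "d a x < e" using Q_dense by blast
  then obtain j where "a = q j" using range_from_nat_into[OF Q_ne Q_countable] unfolding q_def by blast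
  then show ?thesis using a d_sym by metis
qed

end

sublocale dkm \<subseteq> D: Metric_space UNIV d by (rule MS)
sublocale dkm \<subseteq> F: finite_measure M by (rule finM)


lemma abs_mult_le_sq: "\<bar>a * b\<bar> \<le> a\<^sup>2 + (b::real)\<^sup>2"
proof -
  have "2 * \<bar>a\<bar> * \<bar>b\<bar> \<le> \<bar>a\<bar>\<^sup>2 + \<bar>b\<bar>\<^sup>2" by (rule sum_squares_bound)
  moreover have "\<bar>a * b\<bar> = \<bar>a\<bar> * \<bar>b\<bar>" by (simp add: abs_mult)
  moreover have "0 \<le> \<bar>a\<bar> * \<bar>b\<bar>" by simp
  ultimately show ?thesis by simp
qed

context dkm
begin

interpretation P: pair_sigma_finite M M
  unfolding pair_sigma_finite_def using F.sigma_finite_measure_axioms by simp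

definition G :: "nat \<Rightarrow> 'a \<times> 'a \<Rightarrow> real" where
  "G m p = Min ((\<lambda>j. d (fst p) (q j) + d (q j) (snd p)) ` {..m})"

lemma G_meas: "G m \<in> borel_measurable (M \<Otimes>\<^sub>M M)"
  unfolding G_def by measurable

lemma G_lim: "(\<lambda>m. G m p) \<longlonglongrightarrow> d (fst p) (snd p)"
proof (rule metric_LIMSEQ_I)
  fix r :: real assume r: "r > 0"
  obtain x y where p: "p = (x, y)" by (cases p)
  obtain j where j: "d x (q j) < r / 2" using q_dense[of "r/2" x] r by auto
  have "dist (G m p) (d (fst p) (snd p)) < r" if "m \<ge> j" for m
  proof -
    have fin: "finite ((\<lambda>j. d x (q j) + d (q j) y) ` {..m})" by simp
    have ne: "(\<lambda>j. d x (q j) + d (q j) y) ` {..m} \<noteq> {}" by simp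
    have lo: "d x y \<le> G m p"
      unfolding G_def p fst_conv snd_conv by (subst Min_ge_iff[OF fin ne]) (auto intro: d_tri)
    have "G m p \<le> d x (q j) + d (q j) y"
      unfolding G_def p using that by (intro Min_le) auto
    also have "\<dots> \<le> d x (q j) + (d (q j) x + d x y)"
      using d_tri[of "q j" y x] by simp
    also have "\<dots> < d x y + r" using j d_sym[of x "q j"] by simp
    finally show ?thesis using lo p by (simp add: dist_real_def)
  qed
  then show "\<exists>no. \<forall>n\<ge>no. dist (G n p) (d (fst p) (snd p)) < r" by blast
qed

lemma d_meas_prod[measurable]: "(\<lambda>p. d (fst p) (snd p)) \<in> borel_measurable (M \<Otimes>\<^sub>M M)"
  by (rule borel_measurable_LIMSEQ_real[OF G_lim G_meas])

definition L2 where "L2 f \<longleftrightarrow> square_integrable M f"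
definition ip :: "('a \<Rightarrow> real) \<Rightarrow> ('a \<Rightarrow> real) \<Rightarrow> real" where "ip f g = (\<integral>x. f x * g x \<partial>M)"
abbreviation Dop where "Dop f \<equiv> dist_kernel_op M d f"
definition mT where "mT = measure M UNIV"

lemma mT_nonneg: "0 \<le> mT" unfolding mT_def by simp

lemma L2_iff: "L2 f \<longleftrightarrow> f \<in> borel_measurable M \<and> integrable M (\<lambda>x. (f x)\<^sup>2)"
  unfolding L2_def square_integrable_def by simp

lemma L2_meas: "L2 f \<Longrightarrow> f \<in> borel_measurable M" by (simp add: L2_iff)
lemma L2_sq: "L2 f \<Longrightarrow> integrable M (\<lambda>x. (f x)\<^sup>2)" by (simp add: L2_iff)
lemma L2_int: "L2 f \<Longrightarrow> integrable M f"
proof -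
  assume "L2 f"
  then have "f \<in> borel_measurable M" "integrable M (\<lambda>x. (f x)\<^sup>2)" by (simp_all add: L2_iff)
  then show ?thesis by (rule F.square_integrable_imp_integrable)
qed

lemma L2_prod: "L2 f \<Longrightarrow> L2 g \<Longrightarrow> integrable M (\<lambda>x. f x * g x)"
proof -
  assume f: "L2 f" and g: "L2 g"
  show ?thesis
  proof (rule Bochner_Integration.integrable_bound[of M "\<lambda>x. (f x)\<^sup>2 + (g x)\<^sup>2"])
    show "integrable M (\<lambda>x. (f x)\<^sup>2 + (g x)\<^sup>2)" using f g by (simp add: L2_sq)
    have [measurable]: "f \<in> borel_measurable M" "g \<in> borel_measurable M" using f g L2_meas by auto
    show "(\<lambda>x. f x * g x) \<in> borel_measurable M" by measurable
    show "AE x in M. norm (f x * g x) \<le> norm ((f x)\<^sup>2 + (g x)\<^sup>2)"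
      using abs_mult_le_sq by (auto intro!: AE_I2)
  qed
qed

lemma L2_add: "L2 f \<Longrightarrow> L2 g \<Longrightarrow> L2 (\<lambda>x. f x + g x)"
proof -
  assume f: "L2 f" and g: "L2 g"
  have "(\<lambda>x. (f x + g x)\<^sup>2) = (\<lambda>x. (f x)\<^sup>2 + 2 * (f x * g x) + (g x)\<^sup>2)"
    by (intro ext) (simp add: power2_eq_square algebra_simps)
  moreover have "integrable M (\<lambda>x. (f x)\<^sup>2 + 2 * (f x * g x) + (g x)\<^sup>2)"
    using f g L2_prod L2_sq by simp
  moreover have "f \<in> borel_measurable M" "g \<in> borel_measurable M" using f g by (simp_all add: L2_iff)
  ultimately show ?thesis by (simp add: L2_iff)
qed

lemma L2_scale: "L2 f \<Longrightarrow> L2 (\<lambda>x. c * f x)"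
proof -
  assume f: "L2 f"
  have "(\<lambda>x. (c * f x)\<^sup>2) = (\<lambda>x. c\<^sup>2 * (f x)\<^sup>2)" by (simp add: power_mult_distrib)
  moreover have "f \<in> borel_measurable M" "integrable M (\<lambda>x. (f x)\<^sup>2)" using f by (simp_all add: L2_iff)
  ultimately show ?thesis by (simp add: L2_iff)
qed

lemma L2_neg: "L2 f \<Longrightarrow> L2 (\<lambda>x. - f x)"
  using L2_scale[of f "-1"] by simp

lemma L2_diff: "L2 f \<Longrightarrow> L2 g \<Longrightarrow> L2 (\<lambda>x. f x - g x)"
  using L2_add[of f "\<lambda>x. - g x"] L2_neg[of g] by simp

lemma L2_zero: "L2 (\<lambda>x. 0)" by (simp add: L2_iff)

lemma L2_sum: "finite A \<Longrightarrow> (\<And>i. i \<in> A \<Longrightarrow> L2 (u i)) \<Longrightarrow> L2 (\<lambda>x. \<Sum>i\<in>A. u i x)"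
proof (induction A rule: finite_induct)
  case empty then show ?case by (simp add: L2_zero)
next
  case (insert a A) then show ?case using L2_add[of "u a" "\<lambda>x. \<Sum>i\<in>A. u i x"] by simp
qed

lemma L2_bdd: "f \<in> borel_measurable M \<Longrightarrow> (\<And>x. \<bar>f x\<bar> \<le> c) \<Longrightarrow> L2 f"
proof -
  assume m: "f \<in> borel_measurable M" and b: "\<And>x. \<bar>f x\<bar> \<le> c"
  have "integrable M (\<lambda>x. (f x)\<^sup>2)"
  proof (rule F.integrable_const_bound[where B="c\<^sup>2"])
    have "(f x)\<^sup>2 \<le> c\<^sup>2" for x
    proof -
      have "\<bar>f x\<bar>\<^sup>2 \<le> c\<^sup>2" by (rule power_mono[OF b]) simp
      then show ?thesis by simp
    qed
    then show "AE x in M. norm ((f x)\<^sup>2) \<le> c\<^sup>2" by (auto intro!: AE_I2)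
  qed (use m in measurable)
  then show ?thesis using m by (simp add: L2_iff)
qed

lemma L2_d: "L2 (d x)"
  by (rule L2_bdd[OF d_meas abs_d_le])

lemma ip_sym: "ip f g = ip g f"
proof -
  have "(\<lambda>x. f x * g x) = (\<lambda>x. g x * f x)" by (intro ext) (rule mult.commute)
  then show ?thesis by (simp add: ip_def)
qed

lemma ip_add_left: "L2 f \<Longrightarrow> L2 g \<Longrightarrow> L2 h \<Longrightarrow> ip (\<lambda>x. f x + g x) h = ip f h + ip g h"
  unfolding ip_def by (simp add: distrib_right L2_prod)

lemma ip_diff_left: "L2 f \<Longrightarrow> L2 g \<Longrightarrow> L2 h \<Longrightarrow> ip (\<lambda>x. f x - g x) h = ip f h - ip g h"
  unfolding ip_def by (simp add: left_diff_distrib L2_prod)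

lemma ip_scale_left: "ip (\<lambda>x. c * f x) h = c * ip f h"
proof -
  have "(\<lambda>x. c * f x * h x) = (\<lambda>x. c * (f x * h x))" by (intro ext) (rule mult.assoc)
  then show ?thesis by (simp add: ip_def)
qed

lemma ip_sum_left: "finite A \<Longrightarrow> (\<And>i. i \<in> A \<Longrightarrow> L2 (u i)) \<Longrightarrow> L2 h \<Longrightarrow>
   ip (\<lambda>x. \<Sum>i\<in>A. u i x) h = (\<Sum>i\<in>A. ip (u i) h)"
  unfolding ip_def by (simp add: sum_distrib_right L2_prod)

lemma ip_nonneg: "0 \<le> ip f f" unfolding ip_def by (rule Bochner_Integration.integral_nonneg) simp

lemma ip_cong_AE: "L2 f \<Longrightarrow> L2 f' \<Longrightarrow> L2 g \<Longrightarrow> AE x in M. f x = f' x \<Longrightarrow> ip f g = ip f' g"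
proof -
  assume a: "L2 f" "L2 f'" "L2 g" "AE x in M. f x = f' x"
  have [measurable]: "f \<in> borel_measurable M" "f' \<in> borel_measurable M" "g \<in> borel_measurable M"
    using a L2_meas by auto
  show ?thesis unfolding ip_def by (rule integral_cong_AE) (use a(4) in auto)
qed

end


context dkm
begin

interpretation P: pair_sigma_finite M M
  unfolding pair_sigma_finite_def using F.sigma_finite_measure_axioms by simp

lemma ip_quad:
  assumes f: "L2 f" and g: "L2 g"
  shows "ip (\<lambda>x. f x + t * g x) (\<lambda>x. f x + t * g x) = ip f f + 2 * t * ip f g + t\<^sup>2 * ip g g"
proof -
  have eq: "(\<lambda>x. (f x + t * g x) * (f x + t * g x)) =
      (\<lambda>x. f x * f x + (2 * t) * (f x * g x) + t\<^sup>2 * (g x * g x))"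
    by (intro ext) (simp add: power2_eq_square algebra_simps)
  show ?thesis unfolding ip_def eq using f g
    by (simp add: L2_prod integral_mult_right_zero)
qed

lemma CS:
  assumes f: "L2 f" and g: "L2 g"
  shows "(ip f g)\<^sup>2 \<le> ip f f * ip g g"
proof -
  define A where "A = ip f f"
  define C where "C = ip f g"
  define B where "B = ip g g"
  have q: "0 \<le> A + 2 * t * C + t\<^sup>2 * B" for t
    using ip_nonneg[of "\<lambda>x. f x + t * g x"] ip_quad[OF f g, of t] unfolding A_def B_def C_def by simp
  have B0: "0 \<le> B" unfolding B_def by (rule ip_nonneg)
  show ?thesis
  proof (cases "B = 0")
    case True
    have "C = 0"
    proof (rule ccontr)
      assume "C \<noteq> 0"
      have "0 \<le> A + 2 * (- (A + 1) / (2 * C)) * C" using q[of "- (A + 1) / (2 * C)"] True by simp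
      also have "\<dots> = -1" using \<open>C \<noteq> 0\<close> by (simp add: field_simps)
      finally show False by simp
    qed
    then show ?thesis unfolding A_def[symmetric] B_def[symmetric] C_def[symmetric] using True by simp
  next
    case False
    then have Bp: "B > 0" using B0 by simp
    have "0 \<le> A + 2 * (- C / B) * C + (- C / B)\<^sup>2 * B" by (rule q)
    also have "\<dots> = A - C\<^sup>2 / B" using Bp by (simp add: field_simps power2_eq_square)
    finally have "C\<^sup>2 / B \<le> A" by simp
    then have "C\<^sup>2 \<le> A * B" using Bp by (simp add: field_simps)
    then show ?thesis unfolding A_def B_def C_def .
  qed
qed

lemma ip_const_bound:
  assumes "L2 f" "\<And>x. (f x)\<^sup>2 \<le> c"
  shows "ip f f \<le> c * mT"
proof -
  have "ip f f \<le> (\<integral>x. c \<partial>M)"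
    unfolding ip_def
  proof (rule integral_mono)
    show "integrable M (\<lambda>x. f x * f x)" using assms by (simp add: L2_prod)
  qed (use assms in \<open>auto simp: power2_eq_square\<close>)
  also have "\<dots> = c * mT" by (simp add: mT_def)
  finally show ?thesis .
qed

definition K0 where "K0 = Bd\<^sup>2 * mT"

lemma K0_nonneg: "0 \<le> K0" unfolding K0_def using mT_nonneg by simp

lemma Dop_eq_ip: "Dop f x = ip f (d x)" by (simp add: dist_kernel_op_def ip_def)

lemma ip_dd: "ip (d x) (d x) \<le> K0"
proof -
  have "(d x y)\<^sup>2 \<le> Bd\<^sup>2" for y using Bd(2)[of x y] by (simp add: power_mono)
  then have "ip (d x) (d x) \<le> Bd\<^sup>2 * mT" by (rule ip_const_bound[OF L2_d])
  then show ?thesis unfolding K0_def .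
qed

lemma Dop_sq: "L2 f \<Longrightarrow> (Dop f x)\<^sup>2 \<le> K0 * ip f f"
proof -
  assume f: "L2 f"
  have "(Dop f x)\<^sup>2 \<le> ip f f * ip (d x) (d x)" unfolding Dop_eq_ip by (rule CS[OF f L2_d])
  also have "\<dots> \<le> ip f f * K0" by (rule mult_left_mono[OF ip_dd ip_nonneg])
  finally show ?thesis by (simp add: mult.commute)
qed

lemma sq_le_imp_abs_le: "(a::real)\<^sup>2 \<le> b \<Longrightarrow> \<bar>a\<bar> \<le> sqrt b"
  using real_sqrt_le_mono[of "a\<^sup>2" b] by simp

lemma Dop_abs: "L2 f \<Longrightarrow> \<bar>Dop f x\<bar> \<le> sqrt (K0 * ip f f)"
  by (rule sq_le_imp_abs_le[OF Dop_sq])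

lemma Dop_diff_sq: "L2 f \<Longrightarrow> (Dop f x - Dop f x')\<^sup>2 \<le> mT * ip f f * (d x x')\<^sup>2"
proof -
  assume f: "L2 f"
  define h where "h = (\<lambda>y. d x y - d x' y)"
  have h: "L2 h" unfolding h_def by (intro L2_diff L2_d)
  have "ip h f = ip (d x) f - ip (d x') f" unfolding h_def by (rule ip_diff_left[OF L2_d L2_d f])
  then have "Dop f x - Dop f x' = ip h f"
    using ip_sym[of f "d x"] ip_sym[of f "d x'"] by (simp add: Dop_eq_ip)
  then have "(Dop f x - Dop f x')\<^sup>2 \<le> ip h h * ip f f" using CS[OF h f] by simp
  also have "\<dots> \<le> ((d x x')\<^sup>2 * mT) * ip f f"
  proof (rule mult_right_mono[OF _ ip_nonneg])
    have "(h y)\<^sup>2 \<le> (d x x')\<^sup>2" for y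
    proof -
      have "\<bar>h y\<bar> \<le> d x x'" unfolding h_def
        using d_tri[of x y x'] d_tri[of x' y x] d_sym[of x x'] by linarith
      then show ?thesis by (metis abs_ge_zero power2_abs power_mono)
    qed
    then show "ip h h \<le> (d x x')\<^sup>2 * mT" by (rule ip_const_bound[OF h])
  qed
  finally show ?thesis by (simp add: mult_ac)
qed

lemma Dop_lip: "L2 f \<Longrightarrow> \<bar>Dop f x - Dop f x'\<bar> \<le> sqrt (mT * ip f f) * d x x'"
proof -
  assume f: "L2 f"
  have "\<bar>Dop f x - Dop f x'\<bar> \<le> sqrt (mT * ip f f * (d x x')\<^sup>2)"
    by (rule sq_le_imp_abs_le[OF Dop_diff_sq[OF f]])
  also have "\<dots> = sqrt (mT * ip f f) * d x x'" by (simp add: real_sqrt_mult)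
  finally show ?thesis .
qed

lemma Dop_meas: "L2 f \<Longrightarrow> Dop f \<in> borel_measurable M"
  by (rule meas_lip[OF Dop_lip])

lemma L2_Dop: "L2 f \<Longrightarrow> L2 (Dop f)"
  by (rule L2_bdd[OF Dop_meas Dop_abs])

lemma Dop_ip_bound: "L2 f \<Longrightarrow> ip (Dop f) (Dop f) \<le> (K0 * ip f f) * mT"
  by (rule ip_const_bound[OF L2_Dop Dop_sq])

lemma Dop_add: "L2 f \<Longrightarrow> L2 g \<Longrightarrow> Dop (\<lambda>y. f y + g y) x = Dop f x + Dop g x"
  unfolding Dop_eq_ip by (simp add: ip_add_left L2_d)

lemma Dop_diff: "L2 f \<Longrightarrow> L2 g \<Longrightarrow> Dop (\<lambda>y. f y - g y) x = Dop f x - Dop g x"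
  unfolding Dop_eq_ip by (simp add: ip_diff_left L2_d)

lemma Dop_scale: "Dop (\<lambda>y. c * f y) x = c * Dop f x"
  unfolding Dop_eq_ip by (simp add: ip_scale_left)

lemma Dop_sum: "finite A \<Longrightarrow> (\<And>i. i \<in> A \<Longrightarrow> L2 (u i)) \<Longrightarrow>
    Dop (\<lambda>y. \<Sum>i\<in>A. u i y) x = (\<Sum>i\<in>A. Dop (u i) x)"
  unfolding Dop_eq_ip by (simp add: ip_sum_left L2_d)

lemma Dop_cong_AE: "L2 f \<Longrightarrow> L2 g \<Longrightarrow> AE y in M. f y = g y \<Longrightarrow> Dop f x = Dop g x"
  unfolding Dop_eq_ip by (rule ip_cong_AE[OF _ _ L2_d])

lemma prod_int:
  assumes f: "integrable M f" and g: "integrable M g"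
  shows "integrable (M \<Otimes>\<^sub>M M) (\<lambda>p. \<bar>f (fst p) :: real\<bar> * \<bar>g (snd p) :: real\<bar>)"
proof -
  have [measurable]: "f \<in> borel_measurable M" "g \<in> borel_measurable M" using f g by auto
  have "(\<integral>\<^sup>+p. ennreal (norm (\<bar>f (fst p)\<bar> * \<bar>g (snd p)\<bar>)) \<partial>(M \<Otimes>\<^sub>M M))
      = (\<integral>\<^sup>+z. \<integral>\<^sup>+y. ennreal (\<bar>f z\<bar>) * ennreal (\<bar>g y\<bar>) \<partial>M \<partial>M)"
    by (subst F.nn_integral_fst[symmetric]) (auto simp: ennreal_mult abs_mult)
  also have "\<dots> = (\<integral>\<^sup>+z. ennreal (\<bar>f z\<bar>) * (\<integral>\<^sup>+y. ennreal (\<bar>g y\<bar>) \<partial>M) \<partial>M)"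
    by (simp add: nn_integral_cmult)
  also have "\<dots> = (\<integral>\<^sup>+z. ennreal (\<bar>f z\<bar>) \<partial>M) * (\<integral>\<^sup>+y. ennreal (\<bar>g y\<bar>) \<partial>M)"
    by (simp add: nn_integral_multc)
  also have "\<dots> < \<infinity>"
    using f g unfolding integrable_iff_bounded by (simp add: ennreal_mult_less_top)
  finally show ?thesis unfolding integrable_iff_bounded by simp
qed

lemma d_meas_prod'[measurable]: "(\<lambda>p. d (snd p) (fst p)) \<in> borel_measurable (M \<Otimes>\<^sub>M M)"
proof -
  have "(\<lambda>p. d (snd p) (fst p)) = (\<lambda>p. d (fst p) (snd p))" by (intro ext) (rule d_sym)
  then show ?thesis using d_meas_prod by simp
qed

lemma Dop_sa:
  assumes f: "L2 f" and g: "L2 g"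
  shows "ip (Dop f) g = ip f (Dop g)"
proof -
  have [measurable]: "f \<in> borel_measurable M" "g \<in> borel_measurable M" using f g L2_meas by auto
  define F where "F = (\<lambda>z y. f z * d y z * g y)"
  have int: "integrable (M \<Otimes>\<^sub>M M) (case_prod F)"
  proof (rule Bochner_Integration.integrable_bound)
    show "integrable (M \<Otimes>\<^sub>M M) (\<lambda>p. Bd * (\<bar>f (fst p)\<bar> * \<bar>g (snd p)\<bar>))"
      using prod_int[OF L2_int[OF f] L2_int[OF g]] by simp
    show "case_prod F \<in> borel_measurable (M \<Otimes>\<^sub>M M)"
      unfolding F_def by measurable
    have "\<bar>F z y\<bar> \<le> Bd * (\<bar>f z\<bar> * \<bar>g y\<bar>)" for z y
    proof -
      have "\<bar>F z y\<bar> = \<bar>d y z\<bar> * (\<bar>f z\<bar> * \<bar>g y\<bar>)" unfolding F_def by (simp add: abs_mult)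
      also have "\<dots> \<le> Bd * (\<bar>f z\<bar> * \<bar>g y\<bar>)" by (rule mult_right_mono[OF abs_d_le]) simp
      finally show ?thesis .
    qed
    then show "AE p in M \<Otimes>\<^sub>M M. norm (case_prod F p) \<le> norm (Bd * (\<bar>f (fst p)\<bar> * \<bar>g (snd p)\<bar>))"
      using Bd(1) by (auto intro!: AE_I2 simp: abs_mult)
  qed
  have fub: "(\<integral>y. (\<integral>z. F z y \<partial>M) \<partial>M) = (\<integral>z. (\<integral>y. F z y \<partial>M) \<partial>M)"
    by (rule P.Fubini_integral[OF int])
  have "ip (Dop f) g = (\<integral>y. (\<integral>z. F z y \<partial>M) \<partial>M)"
    unfolding ip_def dist_kernel_op_def F_def by (simp only: integral_mult_left_zero)
  also note fub
  also have "(\<integral>z. (\<integral>y. F z y \<partial>M) \<partial>M) = ip f (Dop g)"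
  proof -
    have "(\<integral>y. F z y \<partial>M) = f z * (\<integral>y. g y * d z y \<partial>M)" for z
    proof -
      have "(\<integral>y. F z y \<partial>M) = (\<integral>y. f z * (g y * d z y) \<partial>M)"
        unfolding F_def by (rule Bochner_Integration.integral_cong) (simp_all add: d_sym[of _ z])
      also have "\<dots> = f z * (\<integral>y. g y * d z y \<partial>M)" by (rule integral_mult_right_zero)
      finally show ?thesis .
    qed
    then show ?thesis unfolding ip_def dist_kernel_op_def by simp
  qed
  finally show ?thesis .
qed

end


context dkm
begin

lemma ip_scale2: "ip (\<lambda>x. c * f x) (\<lambda>x. c * f x) = c\<^sup>2 * ip f f"
  using ip_scale_left[of c f "\<lambda>x. c * f x"] ip_scale_left[of c f f] ip_sym[of f "\<lambda>x. c * f x"]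
  by (simp add: power2_eq_square)

lemma Dop_zero: "Dop (\<lambda>y. 0) x = 0" by (simp add: dist_kernel_op_def)

lemma ip_zero_left: "ip (\<lambda>y. 0) g = 0" by (simp add: ip_def)
lemma ip_zero_right: "ip f (\<lambda>y. 0) = 0" by (simp add: ip_def)

lemma ip_self_zero_AE: "L2 f \<Longrightarrow> ip f f = 0 \<Longrightarrow> AE x in M. f x = 0"
proof -
  assume f: "L2 f" and z: "ip f f = 0"
  have "integrable M (\<lambda>x. f x * f x)" using f by (simp add: L2_prod)
  moreover have "(\<integral>x. f x * f x \<partial>M) = 0" using z by (simp add: ip_def)
  ultimately have "AE x in M. f x * f x = 0"
    using integral_nonneg_eq_0_iff_AE[of M "\<lambda>x. f x * f x"] by simp
  then show ?thesis by simp
qed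

lemma dct_ip:
  assumes a: "\<And>k. L2 (a k)" and bd: "\<And>k y. \<bar>a k y\<bar> \<le> c"
    and lim: "\<And>y. (\<lambda>k. a k y) \<longlonglongrightarrow> b y" and bm: "b \<in> borel_measurable M" and h: "L2 h"
  shows "(\<lambda>k. ip (a k) h) \<longlonglongrightarrow> ip b h"
  unfolding ip_def
proof (rule integral_dominated_convergence[where w="\<lambda>y. c * \<bar>h y\<bar>"])
  have [measurable]: "h \<in> borel_measurable M" "b \<in> borel_measurable M" "\<And>k. a k \<in> borel_measurable M"
    using h bm a L2_meas by auto
  show "(\<lambda>x. b x * h x) \<in> borel_measurable M" by measurable
  show "\<And>k. (\<lambda>x. a k x * h x) \<in> borel_measurable M" by measurable
  show "integrable M (\<lambda>y. c * \<bar>h y\<bar>)" using L2_int[OF h] by simp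
  show "AE x in M. (\<lambda>k. a k x * h x) \<longlonglongrightarrow> b x * h x"
    using lim by (auto intro!: AE_I2 tendsto_mult_right)
  show "AE x in M. norm (a k x * h x) \<le> c * \<bar>h x\<bar>" for k
    using bd by (auto intro!: AE_I2 simp: abs_mult mult_right_mono)
qed

lemma dct_sq:
  assumes a: "\<And>k. L2 (a k)" and bd: "\<And>k y. \<bar>a k y\<bar> \<le> c"
    and lim: "\<And>y. (\<lambda>k. a k y) \<longlonglongrightarrow> b y" and bm: "b \<in> borel_measurable M"
  shows "(\<lambda>k. ip (a k) (a k)) \<longlonglongrightarrow> ip b b"
  unfolding ip_def
proof (rule integral_dominated_convergence[where w="\<lambda>y. c * c"])
  have c0: "0 \<le> c" using bd[of 0 undefined] by (meson abs_ge_zero order_trans)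
  have [measurable]: "b \<in> borel_measurable M" "\<And>k. a k \<in> borel_measurable M"
    using bm a L2_meas by auto
  show "(\<lambda>x. b x * b x) \<in> borel_measurable M" by measurable
  show "\<And>k. (\<lambda>x. a k x * a k x) \<in> borel_measurable M" by measurable
  show "integrable M (\<lambda>y. c * c)" by simp
  show "AE x in M. (\<lambda>k. a k x * a k x) \<longlonglongrightarrow> b x * b x"
    using lim by (auto intro!: AE_I2 tendsto_mult)
  have "\<bar>a k x * a k x\<bar> \<le> c * c" for k x
    unfolding abs_mult by (rule mult_mono[OF bd bd]) (auto simp: c0)
  then show "AE x in M. norm (a k x * a k x) \<le> c * c" for k
    by (auto intro!: AE_I2)
qed

lemma lim_bound: "(\<And>k. \<bar>a k\<bar> \<le> (c::real)) \<Longrightarrow> a \<longlonglongrightarrow> b \<Longrightarrow> \<bar>b\<bar> \<le> c"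
  by (rule tendsto_le[OF trivial_limit_sequentially tendsto_const tendsto_rabs]) auto

lemma compactness:
  fixes w :: "nat \<Rightarrow> 'a \<Rightarrow> real"
  assumes w: "\<And>k. L2 (w k)" "\<And>k. ip (w k) (w k) \<le> 1"
  obtains r g where "strict_mono r" "\<And>y. (\<lambda>k. Dop (w (r k)) y) \<longlonglongrightarrow> g y"
proof -
  define F where "F = (\<lambda>k y. Dop (w k) y)"
  have bd: "norm (F k y) \<le> sqrt K0" for k y
  proof -
    have "\<bar>F k y\<bar> \<le> sqrt (K0 * ip (w k) (w k))" unfolding F_def by (rule Dop_abs[OF w(1)])
    also have "\<dots> \<le> sqrt K0"
      using w(2)[of k] K0_nonneg by (simp add: mult_left_le)
    finally show ?thesis by simp
  qed
  define L where "L = sqrt mT"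
  have L0: "0 \<le> L" unfolding L_def using mT_nonneg by simp
  have lip: "\<bar>F k y - F k y'\<bar> \<le> L * d y y'" for k y y'
  proof -
    have "\<bar>F k y - F k y'\<bar> \<le> sqrt (mT * ip (w k) (w k)) * d y y'" unfolding F_def by (rule Dop_lip[OF w(1)])
    also have "\<dots> \<le> L * d y y'"
    proof (rule mult_right_mono)
      show "sqrt (mT * ip (w k) (w k)) \<le> L" unfolding L_def
        using w(2)[of k] mT_nonneg by (simp add: mult_left_le)
    qed simp
    finally show ?thesis .
  qed
  have cQ: "countable (range q)" by simp
  obtain r where r: "strict_mono r" and conv: "\<And>x. x \<in> range q \<Longrightarrow> \<exists>l. (\<lambda>n. F (r n) x) \<longlonglongrightarrow> l"
    using function_convergent_subsequence[OF cQ, of F "sqrt K0"] bd by blast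
  have "Cauchy (\<lambda>k. F (r k) y)" for y
  proof (rule metric_CauchyI)
    fix e :: real assume e: "e > 0"
    obtain j where j: "d y (q j) < e / (3 * (L + 1))"
      using q_dense[of "e / (3 * (L + 1))" y] e L0 by auto
    have "convergent (\<lambda>n. F (r n) (q j))" using conv[of "q j"] by (auto simp: convergent_def)
    then have "Cauchy (\<lambda>n. F (r n) (q j))" by (simp add: convergent_Cauchy)
    then obtain N where N: "\<And>m n. m \<ge> N \<Longrightarrow> n \<ge> N \<Longrightarrow> dist (F (r m) (q j)) (F (r n) (q j)) < e / 3"
      using e unfolding Cauchy_def by (meson divide_pos_pos zero_less_numeral)
    have Lj: "L * d y (q j) < e / 3"
    proof -
      have "L * d y (q j) \<le> (L + 1) * d y (q j)" by (simp add: mult_right_mono)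
      also have "\<dots> < (L + 1) * (e / (3 * (L + 1)))" using j L0 by (intro mult_strict_left_mono) auto
      also have "\<dots> = e / 3" using L0 by (simp add: field_simps)
      finally show ?thesis .
    qed
    have "dist (F (r m) y) (F (r n) y) < e" if "m \<ge> N" "n \<ge> N" for m n
    proof -
      have "\<bar>F (r m) y - F (r m) (q j)\<bar> < e / 3" using lip[of "r m" y "q j"] Lj by linarith
      moreover have "\<bar>F (r n) y - F (r n) (q j)\<bar> < e / 3" using lip[of "r n" y "q j"] Lj by linarith
      moreover have "\<bar>F (r m) (q j) - F (r n) (q j)\<bar> < e / 3" using N[OF that] by (simp add: dist_real_def)
      ultimately show ?thesis unfolding dist_real_def by arith
    qed
    then show "\<exists>M. \<forall>m\<ge>M. \<forall>n\<ge>M. dist (F (r m) y) (F (r n) y) < e" by blast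
  qed
  then have "convergent (\<lambda>k. F (r k) y)" for y by (simp add: Cauchy_convergent_iff)
  then have "(\<lambda>k. F (r k) y) \<longlonglongrightarrow> lim (\<lambda>k. F (r k) y)" for y by (simp add: convergent_LIMSEQ_iff)
  then show ?thesis using that[OF r, of "\<lambda>y. lim (\<lambda>k. F (r k) y)"] unfolding F_def by blast
qed

end

locale dks = dkm +
  fixes lam :: "nat \<Rightarrow> real" and phi :: "nat \<Rightarrow> 'a \<Rightarrow> real"
  assumes simple_spec: "simple_nonzero_spectrum M d"
    and sdata: "spectral_data M d lam phi"
begin

lemma lam_mono: "i \<le> j \<Longrightarrow> \<bar>lam j\<bar> \<le> \<bar>lam i\<bar>"
  using sdata unfolding spectral_data_def by blast

lemma phi_L2: "lam i \<noteq> 0 \<Longrightarrow> L2 (phi i)"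
  using sdata unfolding spectral_data_def L2_def by blast

lemma phi_eig: "lam i \<noteq> 0 \<Longrightarrow> Dop (phi i) x = lam i * phi i x"
  using sdata unfolding spectral_data_def by blast

lemma phi_orth: "lam i \<noteq> 0 \<Longrightarrow> lam j \<noteq> 0 \<Longrightarrow> ip (phi i) (phi j) = (if i = j then 1 else 0)"
  using sdata unfolding spectral_data_def ip_def by blast

lemma complete: "l \<noteq> 0 \<Longrightarrow> is_eigenvalue M d l \<Longrightarrow> \<exists>i. lam i = l"
  using sdata unfolding spectral_data_def by blast

definition psi where "psi i = (if lam i = 0 then (\<lambda>_. 0) else phi i)"

lemma psi_L2: "L2 (psi i)"
  unfolding psi_def using phi_L2 L2_zero by auto

lemma psi_eig: "Dop (psi i) x = lam i * psi i x"
  unfolding psi_def using phi_eig Dop_zero by auto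

lemma psi_eig_fun: "Dop (psi i) = (\<lambda>x. lam i * psi i x)"
  using psi_eig by auto

lemma psi_orth: "ip (psi i) (psi j) = (if i = j \<and> lam i \<noteq> 0 then 1 else 0)"
  unfolding psi_def using phi_orth ip_zero_left ip_zero_right by auto

lemma lam_psi: "lam i * psi i x = lam i * phi i x"
  unfolding psi_def by auto

definition V where "V n f \<longleftrightarrow> L2 f \<and> (\<forall>i<n. ip f (psi i) = 0)"

lemma V_Dop: "V n f \<Longrightarrow> V n (Dop f)"
proof -
  assume v: "V n f"
  then have f: "L2 f" by (simp add: V_def)
  have "ip (Dop f) (psi i) = 0" if "i < n" for i
  proof -
    have "ip (Dop f) (psi i) = ip f (Dop (psi i))" by (rule Dop_sa[OF f psi_L2])
    also have "\<dots> = ip (\<lambda>x. lam i * psi i x) f" unfolding psi_eig_fun by (rule ip_sym)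
    also have "\<dots> = lam i * ip (psi i) f" by (rule ip_scale_left)
    also have "\<dots> = 0" using v that ip_sym[of f "psi i"] by (simp add: V_def)
    finally show ?thesis .
  qed
  then show ?thesis using L2_Dop[OF f] by (simp add: V_def)
qed

lemma ip_psi_sum: "L2 g \<Longrightarrow> ip (\<lambda>y. \<Sum>i\<in>A. c i * psi i y) g = (\<Sum>i\<in>A. c i * ip (psi i) g)"
proof -
  assume g: "L2 g"
  show ?thesis
  proof (cases "finite A")
    case True
    have "ip (\<lambda>y. \<Sum>i\<in>A. c i * psi i y) g = (\<Sum>i\<in>A. ip (\<lambda>y. c i * psi i y) g)"
      by (rule ip_sum_left[OF True _ g]) (rule L2_scale[OF psi_L2])
    then show ?thesis by (simp add: ip_scale_left)
  next
    case False then show ?thesis by (simp add: ip_zero_left)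
  qed
qed

lemma L2_psi_sum: "L2 (\<lambda>y. \<Sum>i\<in>A. c i * psi i y)"
proof (cases "finite A")
  case True then show ?thesis by (intro L2_sum L2_scale psi_L2)
next
  case False then show ?thesis by (simp add: L2_zero)
qed

definition cc where "cc f i = ip f (psi i)"
definition ww where "ww f n = (\<lambda>y. f y - (\<Sum>i<n. cc f i * psi i y))"

context
  fixes f :: "'a \<Rightarrow> real" and n :: nat
  assumes f: "L2 f"
begin

lemma ww_L2: "L2 (ww f n)" unfolding ww_def by (intro L2_diff f L2_psi_sum)

lemma ww_orth: "j < n \<Longrightarrow> ip (ww f n) (psi j) = 0"
proof -
  assume j: "j < n"
  have "ip (ww f n) (psi j) = cc f j - (\<Sum>i<n. cc f i * ip (psi i) (psi j))"
    unfolding ww_def by (simp add: ip_diff_left f L2_psi_sum psi_L2 ip_psi_sum cc_def)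
  also have "(\<Sum>i<n. cc f i * ip (psi i) (psi j)) = (\<Sum>i<n. if i = j then (if lam j \<noteq> 0 then cc f j else 0) else 0)"
    by (rule sum.cong) (auto simp: psi_orth)
  also have "\<dots> = (if lam j \<noteq> 0 then cc f j else 0)" using j by simp
  also have "cc f j - \<dots> = 0"
    by (auto simp: cc_def psi_def ip_zero_right)
  finally show ?thesis .
qed

lemma ww_norm: "ip (ww f n) (ww f n) = ip f (ww f n)"
proof -
  have "ip (\<lambda>y. \<Sum>i<n. cc f i * psi i y) (ww f n) = (\<Sum>i<n. cc f i * ip (psi i) (ww f n))"
    by (rule ip_psi_sum[OF ww_L2])
  also have "\<dots> = 0" using ww_orth ip_sym[of "ww f n"] by simp
  finally have z: "ip (\<lambda>y. \<Sum>i<n. cc f i * psi i y) (ww f n) = 0" .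
  have "ip (ww f n) (ww f n) = ip f (ww f n) - ip (\<lambda>y. \<Sum>i<n. cc f i * psi i y) (ww f n)"
    by (subst (1) ww_def) (rule ip_diff_left[OF f L2_psi_sum ww_L2])
  then show ?thesis using z by simp
qed

lemma ww_val: "ip f (ww f n) = ip f f - (\<Sum>i<n. (cc f i)\<^sup>2)"
proof -
  have "ip (ww f n) f = ip f f - (\<Sum>i<n. cc f i * ip (psi i) f)"
    unfolding ww_def by (simp add: ip_diff_left f L2_psi_sum ip_psi_sum)
  also have "(\<Sum>i<n. cc f i * ip (psi i) f) = (\<Sum>i<n. (cc f i)\<^sup>2)"
    by (rule sum.cong) (auto simp: cc_def ip_sym power2_eq_square)
  finally show ?thesis by (simp add: ip_sym)
qed

lemma ww_le: "ip (ww f n) (ww f n) \<le> ip f f"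
  using ww_norm ww_val by (simp add: sum_nonneg)

lemma ww_V: "V n (ww f n)" using ww_L2 ww_orth by (simp add: V_def)

end

lemma cc_d: "cc (d x) i = lam i * psi i x"
proof -
  have "cc (d x) i = ip (psi i) (d x)" unfolding cc_def by (rule ip_sym)
  also have "\<dots> = Dop (psi i) x" by (simp add: Dop_eq_ip)
  finally show ?thesis by (simp add: psi_eig)
qed

lemma lam_sq_sum: "(\<Sum>i<n. (lam i)\<^sup>2) \<le> K0 * mT"
proof -
  have pt: "(\<Sum>i<n. (lam i * psi i x)\<^sup>2) \<le> K0" for x
  proof -
    have "0 \<le> ip (ww (d x) n) (ww (d x) n)" by (rule ip_nonneg)
    also have "\<dots> = ip (d x) (d x) - (\<Sum>i<n. (cc (d x) i)\<^sup>2)"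
      using ww_norm[OF L2_d] ww_val[OF L2_d] by simp
    finally have "(\<Sum>i<n. (cc (d x) i)\<^sup>2) \<le> ip (d x) (d x)" by simp
    then show ?thesis using ip_dd[of x] by (simp add: cc_d)
  qed
  have int: "integrable M (\<lambda>x. (lam i * psi i x)\<^sup>2)" for i
    using L2_sq[OF L2_scale[OF psi_L2]] .
  have "(\<integral>x. (\<Sum>i<n. (lam i * psi i x)\<^sup>2) \<partial>M) = (\<Sum>i<n. (lam i)\<^sup>2 * ip (psi i) (psi i))"
  proof -
    have "(\<integral>x. (\<Sum>i<n. (lam i * psi i x)\<^sup>2) \<partial>M) = (\<Sum>i<n. (\<integral>x. (lam i * psi i x)\<^sup>2 \<partial>M))"
      by (rule Bochner_Integration.integral_sum) (rule int)
    also have "\<dots> = (\<Sum>i<n. (lam i)\<^sup>2 * ip (psi i) (psi i))"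
    proof (rule sum.cong[OF refl])
      fix i
      have "(\<lambda>x. (lam i * psi i x)\<^sup>2) = (\<lambda>x. (lam i)\<^sup>2 * (psi i x * psi i x))"
        by (intro ext) (simp add: power2_eq_square)
      then show "(\<integral>x. (lam i * psi i x)\<^sup>2 \<partial>M) = (lam i)\<^sup>2 * ip (psi i) (psi i)"
        by (simp add: ip_def)
    qed
    finally show ?thesis .
  qed
  also have "\<dots> = (\<Sum>i<n. (lam i)\<^sup>2)"
    by (rule sum.cong) (auto simp: psi_orth)
  finally have eq: "(\<integral>x. (\<Sum>i<n. (lam i * psi i x)\<^sup>2) \<partial>M) = (\<Sum>i<n. (lam i)\<^sup>2)" .
  have "(\<integral>x. (\<Sum>i<n. (lam i * psi i x)\<^sup>2) \<partial>M) \<le> (\<integral>x. K0 \<partial>M)"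
    by (rule integral_mono) (auto intro: int pt)
  also have "\<dots> = K0 * mT" by (simp add: mT_def)
  finally show ?thesis using eq by simp
qed

lemma lam_tendsto: "(\<lambda>n. (lam n)\<^sup>2) \<longlonglongrightarrow> 0"
proof -
  have "summable (\<lambda>n. (lam n)\<^sup>2)"
    by (rule summableI_nonneg_bounded[where x="K0 * mT"]) (auto intro: lam_sq_sum)
  then show ?thesis by (rule summable_LIMSEQ_zero)
qed

end


context dks
begin

lemma lam_psi2: "lam i * psi i x * psi i y = lam i * phi i x * phi i y"
  unfolding psi_def by auto

lemma no_eig:
  assumes V: "V n e" and eq: "AE y in M. Dop e y = l * e y" and nz: "\<not> (AE y in M. e y = 0)"
    and big: "(lam n)\<^sup>2 < l\<^sup>2"
  shows False
proof -
  have e: "L2 e" using V by (simp add: V_def)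
  have l0: "l \<noteq> 0" using big by (cases "l = 0") auto
  have ef: "is_eigenfun M d l e" using e eq unfolding is_eigenfun_def L2_def by simp
  then have "is_eigenvalue M d l" using nz unfolding is_eigenvalue_def by blast
  then obtain i where li: "lam i = l" using complete l0 by blast
  have "i < n"
  proof (rule ccontr)
    assume "\<not> i < n" then have "n \<le> i" by simp
    then have "\<bar>lam i\<bar> \<le> \<bar>lam n\<bar>" by (rule lam_mono)
    then have "(lam i)\<^sup>2 \<le> (lam n)\<^sup>2" by (simp add: abs_le_square_iff)
    then show False using big li by simp
  qed
  have lam0: "lam i \<noteq> 0" using li l0 by simp
  have pL2: "L2 (phi i)" by (rule phi_L2[OF lam0])
  have phi_ef: "is_eigenfun M d (lam i) (phi i)"
    using pL2 phi_eig[OF lam0] unfolding is_eigenfun_def L2_def by simp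
  have phi_nz: "\<not> (AE y in M. phi i y = 0)"
  proof
    assume "AE y in M. phi i y = 0"
    then have "ip (phi i) (phi i) = ip (\<lambda>y. 0) (phi i)" by (rule ip_cong_AE[OF pL2 L2_zero pL2])
    then show False using phi_orth[OF lam0 lam0] ip_zero_left by simp
  qed
  have e_ef: "is_eigenfun M d (lam i) e" using ef li by simp
  have ss: "\<forall>la f g. la \<noteq> 0 \<and> is_eigenfun M d la f \<and> \<not> (AE x in M. f x = 0) \<and> is_eigenfun M d la g
      \<longrightarrow> (\<exists>c. AE x in M. g x = c * f x)"
    using simple_spec unfolding simple_nonzero_spectrum_def .
  obtain c where c: "AE y in M. e y = c * phi i y"
    using ss[rule_format, of "lam i" "phi i" e] lam0 phi_ef phi_nz e_ef by blast
  have pp: "psi i = phi i" using lam0 by (simp add: psi_def)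
  have "ip e (psi i) = 0" using V \<open>i < n\<close> by (simp add: V_def)
  then have z: "ip e (phi i) = 0" using pp by simp
  have "ip e (phi i) = ip (\<lambda>y. c * phi i y) (phi i)"
    by (rule ip_cong_AE[OF e L2_scale[OF pL2] pL2 c])
  also have "\<dots> = c" using phi_orth[OF lam0 lam0] by (simp add: ip_scale_left)
  finally have "c = 0" using z by simp
  with c have "AE y in M. e y = 0" by simp
  with nz show False by simp
qed

lemma tail:
  assumes v: "V n v"
  shows "ip (Dop v) (Dop v) \<le> (lam n)\<^sup>2 * ip v v"
proof -
  define SS where "SS = {ip (Dop w) (Dop w) | w. V n w \<and> ip w w \<le> 1}"
  define N where "N = Sup SS"
  have V0: "V n (\<lambda>y. 0)" by (simp add: V_def L2_zero ip_zero_left)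
  have Dop0: "Dop (\<lambda>y. 0) = (\<lambda>y. 0)" using Dop_zero by auto
  have ne: "0 \<in> SS" unfolding SS_def
    using V0 by (auto simp: Dop0 ip_zero_left intro!: exI[of _ "\<lambda>y. 0"])
  have bdd: "bdd_above SS"
  proof (rule bdd_aboveI[where M="K0 * mT"])
    fix x assume "x \<in> SS"
    then obtain w where x: "x = ip (Dop w) (Dop w)" "V n w" "ip w w \<le> 1" unfolding SS_def by blast
    have "x \<le> K0 * ip w w * mT" using Dop_ip_bound[of w] x by (simp add: V_def)
    also have "\<dots> \<le> K0 * 1 * mT" using x(3) K0_nonneg mT_nonneg
      by (intro mult_right_mono mult_left_mono) auto
    finally show "x \<le> K0 * mT" by simp
  qed
  have upper: "ip (Dop w) (Dop w) \<le> N" if "V n w" "ip w w \<le> 1" for w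
    unfolding N_def by (rule cSup_upper[OF _ bdd]) (use that in \<open>auto simp: SS_def\<close>)
  have N0: "0 \<le> N" unfolding N_def using cSup_upper[OF ne bdd] .
  have scaled: "ip (Dop w) (Dop w) \<le> N * ip w w" if "V n w" for w
  proof -
    have w: "L2 w" using that by (simp add: V_def)
    show ?thesis
    proof (cases "ip w w = 0")
      case True
      then have ae: "AE y in M. w y = 0" by (rule ip_self_zero_AE[OF w])
      have "Dop w x = 0" for x using Dop_cong_AE[OF w L2_zero ae] Dop_zero by simp
      then have "ip (Dop w) (Dop w) = 0" by (simp add: ip_def)
      then show ?thesis using True by simp
    next
      case False
      define s where "s = ip w w"
      have s: "s > 0" using False ip_nonneg[of w] unfolding s_def by simp
      define u where "u = (\<lambda>y. (1 / sqrt s) * w y)"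
      have uL2: "L2 u" unfolding u_def by (rule L2_scale[OF w])
      have "ip u (psi i) = 0" if "i < n" for i
        unfolding u_def ip_scale_left using that \<open>V n w\<close> by (simp add: V_def)
      then have Vu: "V n u" using uL2 by (simp add: V_def)
      have uu: "ip u u = 1" unfolding u_def ip_scale2 s_def[symmetric] using s by (simp add: power_divide)
      have Du: "Dop u = (\<lambda>y. (1 / sqrt s) * Dop w y)" unfolding u_def by (intro ext) (rule Dop_scale)
      have "ip (Dop u) (Dop u) \<le> N" by (rule upper[OF Vu]) (simp add: uu)
      then have "(1 / s) * ip (Dop w) (Dop w) \<le> N" unfolding Du ip_scale2 using s by (simp add: power_divide)
      then show ?thesis using s unfolding s_def[symmetric] by (simp add: field_simps)
    qed
  qed
  have "N \<le> (lam n)\<^sup>2"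
  proof (rule ccontr)
    assume "\<not> N \<le> (lam n)\<^sup>2"
    then have big: "(lam n)\<^sup>2 < N" by simp
    then have Npos: "N > 0" using zero_le_power2[of "lam n"] by linarith
    have "\<forall>k. \<exists>w. V n w \<and> ip w w \<le> 1 \<and> N - 1 / Suc k < ip (Dop w) (Dop w)"
    proof
      fix k
      have "N - 1 / Suc k < Sup SS" unfolding N_def[symmetric] by simp
      then obtain x where "x \<in> SS" "N - 1 / Suc k < x" using less_cSup_iff[OF _ bdd] ne by blast
      then show "\<exists>w. V n w \<and> ip w w \<le> 1 \<and> N - 1 / Suc k < ip (Dop w) (Dop w)" unfolding SS_def by blast
    qed
    from choice[OF this] obtain w where w': "\<forall>k. V n (w k) \<and> ip (w k) (w k) \<le> 1 \<and> N - 1 / Suc k < ip (Dop (w k)) (Dop (w k))"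
      by blast
    have w: "\<And>k. V n (w k)" "\<And>k. ip (w k) (w k) \<le> 1" "\<And>k. N - 1 / Suc k < ip (Dop (w k)) (Dop (w k))"
      using w' by auto
    have wL2: "\<And>k. L2 (w k)" using w(1) by (simp add: V_def)
    obtain r g where r: "strict_mono r" and lim: "\<And>y. (\<lambda>k. Dop (w (r k)) y) \<longlonglongrightarrow> g y"
      by (rule compactness[of w, OF wL2 w(2)]) blast
    define u where "u k = w (r k)" for k
    have uV: "V n (u k)" and uL2: "L2 (u k)" and u1: "ip (u k) (u k) \<le> 1" for k
      using w wL2 unfolding u_def by auto
    have ulim: "(\<lambda>k. Dop (u k) y) \<longlonglongrightarrow> g y" for y using lim unfolding u_def .
    define X where "X k = ip (Dop (u k)) (Dop (u k))" for k
    have XN: "X k \<le> N" for k unfolding X_def by (rule upper[OF uV u1])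
    have Xlow: "N - 1 / Suc k < X k" for k
    proof -
      have "k \<le> r k" using r by (rule seq_suble)
      then have "1 / real (Suc (r k)) \<le> 1 / real (Suc k)" by (intro divide_left_mono) auto
      then show ?thesis using w(3)[of "r k"] unfolding X_def u_def by linarith
    qed
    have Xlim: "X \<longlonglongrightarrow> N"
    proof (rule tendsto_sandwich[of "\<lambda>k. N - 1 / Suc k" X sequentially "\<lambda>k. N"])
      show "eventually (\<lambda>k. N - 1 / Suc k \<le> X k) sequentially"
        using Xlow by (auto intro!: always_eventually less_imp_le)
      show "eventually (\<lambda>k. X k \<le> N) sequentially" using XN by auto
      have "(\<lambda>k. N - inverse (real (Suc k))) \<longlonglongrightarrow> N - 0"
        by (intro tendsto_intros LIMSEQ_inverse_real_of_nat)
      then show "(\<lambda>k. N - 1 / Suc k) \<longlonglongrightarrow> N" by (simp add: inverse_eq_divide)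
      show "(\<lambda>k. N) \<longlonglongrightarrow> N" by simp
    qed
    define cb where "cb = sqrt K0"
    have Dbd: "\<bar>Dop (u k) y\<bar> \<le> cb" for k y
    proof -
      have "\<bar>Dop (u k) y\<bar> \<le> sqrt (K0 * ip (u k) (u k))" by (rule Dop_abs[OF uL2])
      also have "\<dots> \<le> cb" unfolding cb_def
        using u1[of k] K0_nonneg by (intro real_sqrt_le_mono) (simp add: mult_left_le)
      finally show ?thesis .
    qed
    have gbd: "\<bar>g y\<bar> \<le> cb" for y by (rule lim_bound[OF _ ulim]) (rule Dbd)
    have gm: "g \<in> borel_measurable M"
      by (rule borel_measurable_LIMSEQ_real[where u="\<lambda>k. Dop (u k)", OF ulim Dop_meas[OF uL2]])
    have g: "L2 g" by (rule L2_bdd[OF gm gbd])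
    have DuL2: "L2 (Dop (u k))" for k by (rule L2_Dop[OF uL2])
    have gg: "ip g g = N"
    proof -
      have "X \<longlonglongrightarrow> ip g g" unfolding X_def by (rule dct_sq[OF DuL2 Dbd ulim gm])
      then show ?thesis using Xlim LIMSEQ_unique by blast
    qed
    have gV: "V n g"
    proof -
      have "ip g (psi i) = 0" if "i < n" for i
      proof -
        have "(\<lambda>k. ip (Dop (u k)) (psi i)) \<longlonglongrightarrow> ip g (psi i)"
          by (rule dct_ip[OF DuL2 Dbd ulim gm psi_L2])
        moreover have "ip (Dop (u k)) (psi i) = 0" for k using V_Dop[OF uV[of k]] that by (simp add: V_def)
        ultimately have "(\<lambda>k. 0) \<longlonglongrightarrow> ip g (psi i)" by simp
        then show ?thesis using LIMSEQ_unique tendsto_const by metis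
      qed
      then show ?thesis using g by (simp add: V_def)
    qed
    have D2lim: "(\<lambda>k. Dop (Dop (u k)) y) \<longlonglongrightarrow> Dop g y" for y
      unfolding Dop_eq_ip[of "Dop _"] Dop_eq_ip[of g] by (rule dct_ip[OF DuL2 Dbd ulim gm L2_d])
    define cb2 where "cb2 = sqrt (K0 * (K0 * mT))"
    have DDbd: "\<bar>Dop (Dop (u k)) y\<bar> \<le> cb2" for k y
    proof -
      have "\<bar>Dop (Dop (u k)) y\<bar> \<le> sqrt (K0 * ip (Dop (u k)) (Dop (u k)))" by (rule Dop_abs[OF DuL2])
      also have "\<dots> \<le> cb2" unfolding cb2_def
      proof (rule real_sqrt_le_mono, rule mult_left_mono[OF _ K0_nonneg])
        have "ip (Dop (u k)) (Dop (u k)) \<le> K0 * ip (u k) (u k) * mT" by (rule Dop_ip_bound[OF uL2])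
        also have "\<dots> \<le> K0 * 1 * mT" using u1[of k] K0_nonneg mT_nonneg
          by (intro mult_right_mono mult_left_mono) auto
        finally show "ip (Dop (u k)) (Dop (u k)) \<le> K0 * mT" by simp
      qed
      finally show ?thesis .
    qed
    have DgL2: "L2 (Dop g)" by (rule L2_Dop[OF g])
    have D3lim: "(\<lambda>k. Dop (Dop (Dop (u k))) y) \<longlonglongrightarrow> Dop (Dop g) y" for y
      unfolding Dop_eq_ip[of "Dop (Dop _)"] Dop_eq_ip[of "Dop g"]
      by (rule dct_ip[OF L2_Dop[OF DuL2] DDbd D2lim Dop_meas[OF g] L2_d])
    define e where "e k = (\<lambda>y. Dop (Dop (u k)) y + (- N) * u k y)" for k
    have eL2: "L2 (e k)" for k unfolding e_def by (intro L2_add L2_scale L2_Dop DuL2 uL2)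
    have ee: "ip (e k) (e k) \<le> N * (N - X k)" for k
    proof -
      have q: "ip (e k) (e k) = ip (Dop (Dop (u k))) (Dop (Dop (u k))) + 2 * (- N) * ip (Dop (Dop (u k))) (u k)
          + (- N)\<^sup>2 * ip (u k) (u k)"
        unfolding e_def by (rule ip_quad[OF L2_Dop[OF DuL2] uL2])
      have a: "ip (Dop (Dop (u k))) (Dop (Dop (u k))) \<le> N * X k"
        unfolding X_def by (rule scaled[OF V_Dop[OF uV]])
      have b: "ip (Dop (Dop (u k))) (u k) = X k" unfolding X_def by (rule Dop_sa[OF DuL2 uL2])
      have c: "N\<^sup>2 * ip (u k) (u k) \<le> N\<^sup>2" using u1[of k] by (simp add: mult_left_le)
      have "ip (e k) (e k) = ip (Dop (Dop (u k))) (Dop (Dop (u k))) - 2 * (N * X k) + N\<^sup>2 * ip (u k) (u k)"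
        using q b by simp
      also have "\<dots> \<le> N * X k - 2 * (N * X k) + N\<^sup>2" using a c by linarith
      also have "\<dots> = N * (N - X k)" by (simp add: power2_eq_square algebra_simps)
      finally show ?thesis .
    qed
    have elim0: "(\<lambda>k. ip (e k) (e k)) \<longlonglongrightarrow> 0"
    proof (rule tendsto_sandwich[of "\<lambda>k. 0" _ sequentially "\<lambda>k. N * (N - X k)"])
      show "eventually (\<lambda>k. 0 \<le> ip (e k) (e k)) sequentially" by (simp add: ip_nonneg)
      show "eventually (\<lambda>k. ip (e k) (e k) \<le> N * (N - X k)) sequentially" using ee by simp
      show "(\<lambda>k. 0) \<longlonglongrightarrow> (0::real)" by simp
      have "(\<lambda>k. N * (N - X k)) \<longlonglongrightarrow> N * (N - N)" by (intro tendsto_intros Xlim)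
      then show "(\<lambda>k. N * (N - X k)) \<longlonglongrightarrow> 0" by simp
    qed
    have eig2: "Dop (Dop g) y = N * g y" for y
    proof -
      have De: "Dop (e k) y = Dop (Dop (Dop (u k))) y + (- N) * Dop (u k) y" for k
        unfolding e_def Dop_add[OF L2_Dop[OF DuL2] L2_scale[OF uL2]] Dop_scale by (rule refl)
      have l1: "(\<lambda>k. Dop (e k) y) \<longlonglongrightarrow> Dop (Dop g) y + (- N) * g y"
        unfolding De by (intro tendsto_intros D3lim ulim)
      have l2: "(\<lambda>k. Dop (e k) y) \<longlonglongrightarrow> 0"
      proof (rule Lim_null_comparison[where g="\<lambda>k. sqrt (K0 * ip (e k) (e k))"])
        show "eventually (\<lambda>k. norm (Dop (e k) y) \<le> sqrt (K0 * ip (e k) (e k))) sequentially"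
          using Dop_abs[OF eL2] by simp
        have "(\<lambda>k. sqrt (K0 * ip (e k) (e k))) \<longlonglongrightarrow> sqrt (K0 * 0)" by (intro tendsto_intros elim0)
        then show "(\<lambda>k. sqrt (K0 * ip (e k) (e k))) \<longlonglongrightarrow> 0" by simp
      qed
      from l1 l2 have "Dop (Dop g) y + (- N) * g y = 0" by (rule LIMSEQ_unique)
      then show ?thesis by simp
    qed
    define s where "s = sqrt N"
    have s: "s > 0" "s\<^sup>2 = N" using Npos unfolding s_def by auto
    define h where "h = (\<lambda>y. Dop g y + s * g y)"
    have hL2: "L2 h" unfolding h_def by (intro L2_add L2_scale DgL2 g)
    have Dh: "Dop h y = s * h y" for y
    proof -
      have "Dop h y = Dop (Dop g) y + s * Dop g y" unfolding h_def by (simp add: Dop_add DgL2 L2_scale g Dop_scale)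
      also have "\<dots> = s * h y" unfolding h_def eig2 using s(2) by (simp add: power2_eq_square algebra_simps)
      finally show ?thesis .
    qed
    have hV: "V n h"
    proof -
      have "ip h (psi i) = 0" if "i < n" for i
      proof -
        have "ip h (psi i) = ip (Dop g) (psi i) + ip (\<lambda>y. s * g y) (psi i)"
          unfolding h_def by (rule ip_add_left[OF DgL2 L2_scale[OF g] psi_L2])
        also have "\<dots> = 0" using V_Dop[OF gV] gV that by (simp add: V_def ip_scale_left)
        finally show ?thesis .
      qed
      then show ?thesis using hL2 by (simp add: V_def)
    qed
    show False
    proof (cases "AE y in M. h y = 0")
      case False
      show False by (rule no_eig[OF hV _ False, of s]) (use Dh s big in auto)
    next
      case True
      have ae: "AE y in M. Dop g y = (- s) * g y" using True unfolding h_def by eventually_elim simp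
      have gnz: "\<not> (AE y in M. g y = 0)"
      proof
        assume "AE y in M. g y = 0"
        then have "ip g g = ip (\<lambda>y. 0) g" by (rule ip_cong_AE[OF g L2_zero g])
        then show False using gg Npos ip_zero_left by simp
      qed
      show False by (rule no_eig[OF gV ae gnz]) (use s big in simp)
    qed
  qed
  then show ?thesis using scaled[OF v] ip_nonneg[of v] by (meson mult_right_mono order_trans)
qed

end


context dks
begin

lemma ww_d_eq: "ww (d x) n = (\<lambda>y. d x y - (\<Sum>i<n. lam i * phi i x * phi i y))"
  unfolding ww_def cc_d by (intro ext) (simp add: lam_psi2)

lemma L2_resid: "L2 (\<lambda>y. d x y - (\<Sum>i<n. lam i * phi i x * phi i y))"
  using ww_L2[OF L2_d, of x n] unfolding ww_d_eq .

lemma parseval: "(\<lambda>n. \<integral>y. (d x y - (\<Sum>i<n. lam i * phi i x * phi i y))\<^sup>2 \<partial>M) \<longlonglongrightarrow> 0"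
proof -
  define w where "w n = ww (d x) n" for n
  have wL2: "L2 (w n)" for n unfolding w_def by (rule ww_L2[OF L2_d])
  have wV: "V n (w n)" for n unfolding w_def by (rule ww_V[OF L2_d])
  define a where "a n = ip (w n) (w n)" for n
  have eq: "(\<integral>y. (d x y - (\<Sum>i<n. lam i * phi i x * phi i y))\<^sup>2 \<partial>M) = a n" for n
    unfolding a_def ip_def w_def ww_d_eq by (simp add: power2_eq_square)
  have a_eq: "a n = Dop (w n) x" for n
  proof -
    have "a n = ip (d x) (w n)" unfolding a_def w_def by (rule ww_norm[OF L2_d])
    also have "\<dots> = ip (w n) (d x)" by (rule ip_sym)
    also have "\<dots> = Dop (w n) x" by (simp add: Dop_eq_ip)
    finally show ?thesis .
  qed
  have a0: "0 \<le> a n" for n unfolding a_def by (rule ip_nonneg)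
  have aK: "a n \<le> K0" for n
    using ww_le[OF L2_d, of x n] ip_dd[of x] unfolding a_def w_def by linarith
  define L where "L = sqrt (mT * K0)"
  have L0: "0 \<le> L" unfolding L_def using mT_nonneg K0_nonneg by simp
  have lip: "\<bar>Dop (w n) y - Dop (w n) x\<bar> \<le> L * d x y" for n y
  proof -
    have "\<bar>Dop (w n) y - Dop (w n) x\<bar> \<le> sqrt (mT * ip (w n) (w n)) * d y x" by (rule Dop_lip[OF wL2])
    also have "\<dots> \<le> L * d y x"
    proof (rule mult_right_mono)
      show "sqrt (mT * ip (w n) (w n)) \<le> L" unfolding L_def
        using aK[of n] mT_nonneg by (intro real_sqrt_le_mono mult_left_mono) (auto simp: a_def)
    qed simp
    finally show ?thesis by (simp add: d_sym[of y x])
  qed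
  have DD: "ip (Dop (w n)) (Dop (w n)) \<le> (lam n)\<^sup>2 * K0" for n
  proof -
    have "ip (Dop (w n)) (Dop (w n)) \<le> (lam n)\<^sup>2 * a n" unfolding a_def by (rule tail[OF wV])
    also have "\<dots> \<le> (lam n)\<^sup>2 * K0" by (rule mult_left_mono[OF aK]) simp
    finally show ?thesis .
  qed
  have "a \<longlonglongrightarrow> 0"
  proof (rule metric_LIMSEQ_I)
    fix \<epsilon> :: real assume \<epsilon>: "\<epsilon> > 0"
    define \<rho> where "\<rho> = \<epsilon> / (2 * (L + 1))"
    have \<rho>: "\<rho> > 0" unfolding \<rho>_def using \<epsilon> L0 by simp
    define B where "B = D.mball x \<rho>"
    have Bopen: "open B" unfolding B_def by (rule open_mball)
    have xB: "x \<in> B" unfolding B_def using \<rho> by simp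
    have Bsets: "B \<in> sets M" using Bopen sets_M by simp
    have "emeasure M B > 0" using posM Bopen xB unfolding strictly_positive_def by blast
    then have mB: "measure M B > 0" using F.emeasure_eq_measure[of B] by simp
    define \<tau> where "\<tau> = (\<epsilon> / 2)\<^sup>2 * measure M B"
    have \<tau>: "\<tau> > 0" unfolding \<tau>_def using \<epsilon> mB by simp
    have "(\<lambda>n. (lam n)\<^sup>2 * K0) \<longlonglongrightarrow> 0 * K0" by (intro tendsto_intros lam_tendsto)
    then have "(\<lambda>n. (lam n)\<^sup>2 * K0) \<longlonglongrightarrow> 0" by simp
    from LIMSEQ_D[OF this \<tau>] obtain N0 where N0: "\<And>n. n \<ge> N0 \<Longrightarrow> norm ((lam n)\<^sup>2 * K0 - 0) < \<tau>"
      by blast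
    have "dist (a n) 0 < \<epsilon>" if "n \<ge> N0" for n
    proof (rule ccontr)
      assume "\<not> dist (a n) 0 < \<epsilon>"
      then have a\<epsilon>: "a n \<ge> \<epsilon>" using a0[of n] by (simp add: dist_real_def)
      have pt: "(\<epsilon> / 2)\<^sup>2 * indicator B y \<le> Dop (w n) y * Dop (w n) y" for y
      proof (cases "y \<in> B")
        case True
        then have "d x y < \<rho>" unfolding B_def by simp
        then have "L * d x y \<le> L * \<rho>" using L0 by (simp add: mult_left_mono)
        also have "L * \<rho> \<le> \<epsilon> / 2" unfolding \<rho>_def using L0 \<epsilon> by (simp add: field_simps)
        finally have "Dop (w n) y \<ge> \<epsilon> / 2" using lip[of n y] a_eq[of n] a\<epsilon> by linarith
        then have "(\<epsilon> / 2)\<^sup>2 \<le> (Dop (w n) y)\<^sup>2" using \<epsilon> by (intro power_mono) auto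
        then show ?thesis using True by (simp add: power2_eq_square)
      next
        case False then show ?thesis by simp
      qed
      have intB: "integrable M (\<lambda>y. (\<epsilon> / 2)\<^sup>2 * indicator B y)"
        using Bsets by (intro integrable_mult_right) (simp add: integrable_indicator_iff less_top[symmetric])
      have "\<tau> = (\<integral>y. (\<epsilon> / 2)\<^sup>2 * indicator B y \<partial>M)" unfolding \<tau>_def using Bsets by simp
      also have "\<dots> \<le> ip (Dop (w n)) (Dop (w n))" unfolding ip_def
        by (rule integral_mono[OF intB L2_prod[OF L2_Dop[OF wL2] L2_Dop[OF wL2]] pt])
      also have "\<dots> \<le> (lam n)\<^sup>2 * K0" by (rule DD)
      also have "\<dots> < \<tau>" using N0[OF that] by simp
      finally show False by simp
    qed
    then show "\<exists>no. \<forall>n\<ge>no. dist (a n) 0 < \<epsilon>" by blast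
  qed
  then show ?thesis unfolding eq .
qed

end

lemma sq_conv: "(\<lambda>k. ((a::real) - s k)\<^sup>2) \<longlonglongrightarrow> 0 \<Longrightarrow> s \<longlonglongrightarrow> a"
proof -
  assume h: "(\<lambda>k. (a - s k)\<^sup>2) \<longlonglongrightarrow> 0"
  have "(\<lambda>k. sqrt ((a - s k)\<^sup>2)) \<longlonglongrightarrow> sqrt 0" by (intro tendsto_intros h)
  then have "(\<lambda>k. \<bar>a - s k\<bar>) \<longlonglongrightarrow> 0" by simp
  then have "(\<lambda>k. a - s k) \<longlonglongrightarrow> 0" by (simp add: tendsto_rabs_zero_iff)
  then have "(\<lambda>k. a - (a - s k)) \<longlonglongrightarrow> a - 0" by (intro tendsto_intros)
  then show ?thesis by simp
qed

lemma term_eq: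
  assumes "dk_embedding lam phi = dk_embedding lam' phi'"
  shows "lam i * phi i x * phi i y = lam' i * phi' i x * phi' i (y::'a)"
proof -
  have key: "complex_of_real (l i * p i x * p i y) = scaled_eigenfun l p i x * scaled_eigenfun l p i y"
    for l :: "nat \<Rightarrow> real" and p :: "nat \<Rightarrow> 'a \<Rightarrow> real"
  proof (cases "l i = 0")
    case True then show ?thesis by (simp add: scaled_eigenfun_def)
  next
    case False
    have "scaled_eigenfun l p i x * scaled_eigenfun l p i y
        = (csqrt (complex_of_real (l i)))\<^sup>2 * complex_of_real (p i x) * complex_of_real (p i y)"
      using False by (simp add: scaled_eigenfun_def power2_eq_square mult_ac)
    also have "\<dots> = complex_of_real (l i * p i x * p i y)" by simp
    finally show ?thesis by simp
  qed
  have e: "scaled_eigenfun lam phi i z = scaled_eigenfun lam' phi' i z" for z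
    using fun_cong[OF fun_cong[OF assms, of z], of i] unfolding dk_embedding_def by simp
  have "complex_of_real (lam i * phi i x * phi i y) = complex_of_real (lam' i * phi' i x * phi' i y)"
    unfolding key e ..
  then show ?thesis by (simp only: of_real_eq_iff)
qed


theorem lemma6p2:
  fixes \<mu> \<mu>' :: "'a::topological_space measure"
    and d d' :: "'a \<Rightarrow> 'a \<Rightarrow> real"
    and lam lam' :: "nat \<Rightarrow> real"
    and phi phi' :: "nat \<Rightarrow> 'a \<Rightarrow> real"
  assumes "compact (UNIV :: 'a set)"
    and "sets \<mu> = sets borel" and "sets \<mu>' = sets borel"
    and "finite_measure \<mu>" and "finite_measure \<mu>'"
    and "strictly_positive \<mu>" and "strictly_positive \<mu>'"
    and "absolutely_continuous \<mu>' \<mu>"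
    and "metric_inducing_topology d" and "metric_inducing_topology d'"
    and "simple_nonzero_spectrum \<mu> d" and "simple_nonzero_spectrum \<mu>' d'"
    and "spectral_data \<mu> d lam phi" and "spectral_data \<mu>' d' lam' phi'"
    and "dk_embedding lam phi = dk_embedding lam' phi'"
  shows "d = d'"
proof -
  have "dks \<mu> d lam phi" unfolding dks_def dks_axioms_def dkm_def using assms by simp
  then interpret X: dks \<mu> d lam phi .
  have "dks \<mu>' d' lam' phi'" unfolding dks_def dks_axioms_def dkm_def using assms by simp
  then interpret Y: dks \<mu>' d' lam' phi' .
  define S where "S n x y = (\<Sum>i<n. lam i * phi i x * phi i y)" for n x y
  have S': "(\<Sum>i<n. lam' i * phi' i x * phi' i y) = S n x y" for n x y
    unfolding S_def using term_eq[OF assms(15)] by simp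
  have "d x = d' x" for x
  proof -
    have pX: "(\<lambda>n. \<integral>y. (d x y - S n x y)\<^sup>2 \<partial>\<mu>) \<longlonglongrightarrow> 0"
      using X.parseval[of x] unfolding S_def .
    have pY: "(\<lambda>n. \<integral>y. (d' x y - S n x y)\<^sup>2 \<partial>\<mu>') \<longlonglongrightarrow> 0"
      using Y.parseval[of x] unfolding S' .
    have iX: "integrable \<mu> (\<lambda>y. (d x y - S n x y)\<^sup>2)" for n
      using X.L2_sq[OF X.L2_resid[of x n]] unfolding S_def .
    have iY: "integrable \<mu>' (\<lambda>y. (d' x y - S n x y)\<^sup>2)" for n
      using Y.L2_sq[OF Y.L2_resid[of x n]] unfolding S' .
    obtain r1 where r1: "strict_mono r1" and ae1: "AE y in \<mu>'. (\<lambda>k. (d' x y - S (r1 k) x y)\<^sup>2) \<longlonglongrightarrow> 0"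
      using tendsto_L1_AE_subseq[where u="\<lambda>n y. (d' x y - S n x y)\<^sup>2" and M="\<mu>'", OF iY] pY by auto
    have ae1': "AE y in \<mu>. (\<lambda>k. (d' x y - S (r1 k) x y)\<^sup>2) \<longlonglongrightarrow> 0"
    proof -
      from ae1 obtain N where N1: "{y \<in> space \<mu>'. \<not> (\<lambda>k. (d' x y - S (r1 k) x y)\<^sup>2) \<longlonglongrightarrow> 0} \<subseteq> N"
        and N2: "emeasure \<mu>' N = 0" and N3: "N \<in> sets \<mu>'" by (rule AE_E)
      have N: "{y \<in> space \<mu>'. \<not> (\<lambda>k. (d' x y - S (r1 k) x y)\<^sup>2) \<longlonglongrightarrow> 0} \<subseteq> N" "N \<in> null_sets \<mu>'"
        using N1 N2 N3 by (auto intro: null_setsI)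
      have "N \<in> null_sets \<mu>" using N(2) assms(8) unfolding absolutely_continuous_def by auto
      moreover have "{y \<in> space \<mu>. \<not> (\<lambda>k. (d' x y - S (r1 k) x y)\<^sup>2) \<longlonglongrightarrow> 0} \<subseteq> N"
        using N(1) X.space_M Y.space_M by simp
      ultimately show ?thesis by (rule AE_I')
    qed
    have pX1: "(\<lambda>k. \<integral>y. (d x y - S (r1 k) x y)\<^sup>2 \<partial>\<mu>) \<longlonglongrightarrow> 0"
      using LIMSEQ_subseq_LIMSEQ[OF pX r1] by (simp add: o_def)
    obtain r2 where r2: "strict_mono r2" and ae2: "AE y in \<mu>. (\<lambda>k. (d x y - S (r1 (r2 k)) x y)\<^sup>2) \<longlonglongrightarrow> 0"
      using tendsto_L1_AE_subseq[where u="\<lambda>k y. (d x y - S (r1 k) x y)\<^sup>2" and M="\<mu>", OF iX] pX1 by auto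
    have ae: "AE y in \<mu>. d x y = d' x y"
      using ae1' ae2
    proof eventually_elim
      case (elim y)
      have "(\<lambda>k. (d' x y - S (r1 (r2 k)) x y)\<^sup>2) \<longlonglongrightarrow> 0"
        using LIMSEQ_subseq_LIMSEQ[OF elim(1) r2] by (simp add: o_def)
      then have l1: "(\<lambda>k. S (r1 (r2 k)) x y) \<longlonglongrightarrow> d' x y" by (rule sq_conv)
      have l2: "(\<lambda>k. S (r1 (r2 k)) x y) \<longlonglongrightarrow> d x y" using elim(2) by (rule sq_conv)
      show ?case using LIMSEQ_unique[OF l2 l1] .
    qed
    define U where "U = {y. d x y \<noteq> d' x y}"
    have Uo: "open U" unfolding U_def by (rule open_Collect_neq[OF X.d_cont Y.d_cont])
    have Us: "U \<in> sets \<mu>" using Uo assms(2) by simp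
    have "emeasure \<mu> U = 0"
      using ae AE_iff_measurable[OF Us, of "\<lambda>y. d x y = d' x y"] unfolding U_def by simp
    then have "U = {}" using Uo assms(6) unfolding strictly_positive_def by force
    then show ?thesis unfolding U_def by auto
  qed
  then show ?thesis by auto
qed

end
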